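(* Let $k\geq3$ and let $G$ be a $k$-uniform hypergraph; if $k=3$ assume moreover that $G$ is $K_4^{(3)-}$-free. Let $\Pi=(P,\psi_\Pi)$ be a picture over $G$ with $P\subseteq[k]^m$, let $x\in V(G)$, put $\Pi_x=\psi_\Pi^{-1}(x)$, let $n\geq 1$, and let $\mathscr{L}$ be a collection of combinatorial lines in $(\Pi_x)^n$ containing neither tripods nor triangles. Then the amalgamation $\Pi\boxplus\mathscr{L}=(Q,\psi_\Sigma)$, with $Q=\bigcup_{U\in\mathscr{L}}\eta_U^+[P]\subseteq[k]^{mn}$ and $\psi_\Sigma=\bigcup_{U\in\mathscr{L}}\psi_\Pi\circ(\eta_U^+|_P)^{-1}$, is again a picture over $G$.
   Context: $K_4^{(3)-}$ is the 3-uniform hypergraph with four vertices and three edges. Combinatorial lines in $B^n$ for a finite alphabet $B$: sets $\{\eta(a)\colon a\in B\}$ where, for a partition $[n]=C\cup M$ with $M\neq\emptyset$ and $g\colon C\to B$, $\eta(a)$ has $i$-th coordinate $g(i)$ for $i\in C$ and $a$ for $i\in M$; $M$ is the set of moving coordinates of the line. A quasiline in $[k]^N$ is a $k$-element subset $L$ such that in every coordinate the entries of the points of $L$ are all identical or mutually distinct. A picture over $G$ is a pair $(P,\psi)$ with $P\subseteq[k]^m$ for some $m$ and $\psi\colon P\to V(G)$ such that every quasiline $L\subseteq P$ is a combinatorial line and $\psi[L]\in E(G)$. Three distinct lines form a triangle if any two intersect but they have no common point; three distinct lines $L,L',L''$ through a common point form a tripod if the moving coordinates of $L$ are the disjoint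 union of those of $L'$ and $L''$. $\Pi_x\subseteq[k]^m$ is viewed as an alphabet and $([k]^m)^n$ is identified with $[k]^{mn}$ by concatenating blocks. For $U\in\mathscr{L}$ with fixed representation $(C,M,g)$, $g\colon C\to\Pi_x$, the map $\eta_U^+\colon[k]^m\to[k]^{mn}$ sends $a$ to the tuple of blocks whose $c$-th block is $g(c)$ for $c\in C$ and whose $j$-th block is $a$ for $j\in M$. (The maps $\psi_\Pi\circ(\eta_U^+|_P)^{-1}$ agree on common points of their domains, so $\psi_\Sigma$ is a well-defined function $Q\to V(G)$.) *)

theory Defs
  imports Main
begin

text \<open>Points of B^n are lists of length n over the alphabet B; [k] = {1..k}.\<close>

definition cube :: "'b set \<Rightarrow> nat \<Rightarrow> 'b list set" where
  "cube B n = {p. length p = n \<and> set p \<subseteq> B}"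

definition line_pt :: "nat \<Rightarrow> nat set \<Rightarrow> (nat \<Rightarrow> 'b) \<Rightarrow> 'b \<Rightarrow> 'b list" where
  "line_pt n M g a = map (\<lambda>i. if i \<in> M then a else g i) [0..<n]"

definition line_rep :: "'b set \<Rightarrow> nat \<Rightarrow> nat set \<Rightarrow> (nat \<Rightarrow> 'b) \<Rightarrow> 'b list set \<Rightarrow> bool" where
  "line_rep B n M g U \<longleftrightarrow> M \<subseteq> {..<n} \<and> M \<noteq> {} \<and> (\<forall>i\<in>{..<n} - M. g i \<in> B)
     \<and> U = line_pt n M g ` B"

definition comb_line :: "'b set \<Rightarrow> nat \<Rightarrow> 'b list set \<Rightarrow> bool" where
  "comb_line B n U \<longleftrightarrow> (\<exists>M g. line_rep B n M g U)"

definition quasiline :: "nat \<Rightarrow> nat \<Rightarrow> nat list set \<Rightarrow> bool" where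
  "quasiline k N L \<longleftrightarrow> L \<subseteq> cube {1..k} N \<and> card L = k \<and>
     (\<forall>i<N. (\<forall>p\<in>L. \<forall>q\<in>L. p ! i = q ! i) \<or> inj_on (\<lambda>p. p ! i) L)"

definition uniform_hypergraph :: "nat \<Rightarrow> 'v set \<Rightarrow> 'v set set \<Rightarrow> bool" where
  "uniform_hypergraph k V E \<longleftrightarrow> (\<forall>e\<in>E. e \<subseteq> V \<and> card e = k)"

definition K4minus_free :: "'v set set \<Rightarrow> bool" where
  "K4minus_free E \<longleftrightarrow> \<not> (\<exists>S. card S = 4 \<and> 3 \<le> card {e\<in>E. e \<subseteq> S})"

definition picture :: "nat \<Rightarrow> 'v set \<Rightarrow> 'v set set \<Rightarrow> nat \<Rightarrow> nat list set \<Rightarrow> (nat list \<Rightarrow> 'v) \<Rightarrow> bool" where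
  "picture k V E m P psi \<longleftrightarrow> P \<subseteq> cube {1..k} m \<and> (\<forall>p\<in>P. psi p \<in> V) \<and>
     (\<forall>L. quasiline k m L \<and> L \<subseteq> P \<longrightarrow> comb_line {1..k} m L \<and> psi ` L \<in> E)"

definition eta_plus :: "nat \<Rightarrow> nat set \<Rightarrow> (nat \<Rightarrow> nat list) \<Rightarrow> nat list \<Rightarrow> nat list" where
  "eta_plus n M g a = concat (line_pt n M g a)"

definition no_tripod :: "'b list set set \<Rightarrow> ('b list set \<Rightarrow> nat set) \<Rightarrow> bool" where
  "no_tripod \<L> Mv \<longleftrightarrow> \<not> (\<exists>L1\<in>\<L>. \<exists>L2\<in>\<L>. \<exists>L3\<in>\<L>. L1 \<noteq> L2 \<and> L1 \<noteq> L3 \<and> L2 \<noteq> L3 \<and>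
      L1 \<inter> L2 \<inter> L3 \<noteq> {} \<and> Mv L1 = Mv L2 \<union> Mv L3 \<and> Mv L2 \<inter> Mv L3 = {})"

definition no_triangle :: "'b list set set \<Rightarrow> bool" where
  "no_triangle \<L> \<longleftrightarrow> \<not> (\<exists>L1\<in>\<L>. \<exists>L2\<in>\<L>. \<exists>L3\<in>\<L>. L1 \<noteq> L2 \<and> L1 \<noteq> L3 \<and> L2 \<noteq> L3 \<and>
      L1 \<inter> L2 \<noteq> {} \<and> L1 \<inter> L3 \<noteq> {} \<and> L2 \<inter> L3 \<noteq> {} \<and> L1 \<inter> L2 \<inter> L3 = {})"

text \<open>Amalgamation: Q and psi_Sigma (well-defined by the paper's remark; SOME picks the value).\<close>
definition amalg_Q :: "nat list set \<Rightarrow> nat \<Rightarrow> nat list list set set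
    \<Rightarrow> (nat list list set \<Rightarrow> nat set) \<Rightarrow> (nat list list set \<Rightarrow> nat \<Rightarrow> nat list) \<Rightarrow> nat list set" where
  "amalg_Q P n \<L> Mr gr = (\<Union>U\<in>\<L>. eta_plus n (Mr U) (gr U) ` P)"

definition amalg_psi :: "nat list set \<Rightarrow> (nat list \<Rightarrow> 'v) \<Rightarrow> nat \<Rightarrow> nat list list set set
    \<Rightarrow> (nat list list set \<Rightarrow> nat set) \<Rightarrow> (nat list list set \<Rightarrow> nat \<Rightarrow> nat list) \<Rightarrow> nat list \<Rightarrow> 'v" where
  "amalg_psi P psi n \<L> Mr gr q =
     (SOME v. \<exists>U\<in>\<L>. \<exists>p\<in>P. q = eta_plus n (Mr U) (gr U) p \<and> v = psi p)"

end

theory Submission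
  imports Defs
begin
definition blk :: "nat \<Rightarrow> nat \<Rightarrow> 'a list \<Rightarrow> 'a list" where
  "blk m j q = map (\<lambda>t. q ! (j*m+t)) [0..<m]"

lemma length_concat_blocks:
  "\<forall>y\<in>set xs. length y = m \<Longrightarrow> length (concat xs) = length xs * m"
  by (induction xs) auto

lemma nth_concat_blocks:
  "\<forall>y\<in>set xs. length y = m \<Longrightarrow> j < length xs \<Longrightarrow> t < m \<Longrightarrow> concat xs ! (j*m+t) = xs!j!t"
proof (induction xs arbitrary: j)
  case Nil then show ?case by simp
next
  case (Cons y ys)
  show ?case
  proof (cases j)
    case 0 then show ?thesis using Cons by (simp add: nth_append)
  next
    case (Suc j')
    have "concat (y#ys) ! (j*m+t) = concat ys ! (j'*m+t)"
      using Cons.prems Suc by (simp add: nth_append)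
    also have "\<dots> = ys!j'!t" using Cons Suc by simp
    finally show ?thesis using Suc by simp
  qed
qed

lemma blk_eqI:
  assumes "length q = m*n" "length q' = m*n" "\<forall>j<n. blk m j q = blk m j q'"
  shows "q = q'"
proof (rule nth_equalityI)
  show "length q = length q'" using assms by simp
  fix i assume "i < length q"
  hence i: "i < m*n" using assms by simp
  hence m0: "m > 0" by (cases m) auto
  define j where "j = i div m"
  define t where "t = i mod m"
  have ji: "i = j*m+t" unfolding j_def t_def by simp
  have "j < n" using i m0 unfolding j_def by (simp add: less_mult_imp_div_less mult.commute)
  have "t < m" using m0 unfolding t_def by simp
  have "blk m j q ! t = blk m j q' ! t" using assms(3) \<open>j<n\<close> by simp
  thus "q ! i = q' ! i" using \<open>t<m\<close> ji by (simp add: blk_def)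
qed

lemma line_pt_cong:
  "\<forall>i<n. i \<notin> M \<longrightarrow> g i = g' i \<Longrightarrow> line_pt n M g = line_pt n M g'"
  unfolding line_pt_def by (rule ext) auto

lemma length_line_pt[simp]: "length (line_pt n M g a) = n"
  by (simp add: line_pt_def)

lemma nth_line_pt[simp]: "i < n \<Longrightarrow> line_pt n M g a ! i = (if i \<in> M then a else g i)"
  by (simp add: line_pt_def)

lemma eta_len:
  assumes "length a = m" "\<forall>i<n. i \<notin> M \<longrightarrow> length (g i) = m"
  shows "length (eta_plus n M g a) = m*n"
  unfolding eta_plus_def line_pt_def
  by (subst length_concat_blocks[where m=m]) (use assms in auto)

lemma eta_nth:
  assumes "length a = m" "\<forall>i<n. i \<notin> M \<longrightarrow> length (g i) = m" "j < n" "t < m"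
  shows "eta_plus n M g a ! (j*m+t) = (if j \<in> M then a else g j) ! t"
  unfolding eta_plus_def line_pt_def
  by (subst nth_concat_blocks[where m=m]) (use assms in auto)

lemma eta_blk:
  assumes "length a = m" "\<forall>i<n. i \<notin> M \<longrightarrow> length (g i) = m" "j < n"
  shows "blk m j (eta_plus n M g a) = (if j \<in> M then a else g j)"
  by (rule nth_equalityI) (use assms in \<open>auto simp: blk_def eta_nth\<close>)

lemma line_two_points:
  assumes "line_rep B m M g A" "line_rep B m M' g' A'" "u \<in> A" "u \<in> A'" "v \<in> A" "v \<in> A'" "u \<noteq> v"
  shows "A = A'"
proof -
  obtain a b where ab: "a \<in> B" "b \<in> B" "u = line_pt m M g a" "v = line_pt m M g b"
    using assms unfolding line_rep_def by auto
  obtain a' b' where ab': "a' \<in> B" "b' \<in> B" "u = line_pt m M' g' a'" "v = line_pt m M' g' b'"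
    using assms unfolding line_rep_def by auto
  have "a \<noteq> b" using ab assms(7) by auto
  have "a' \<noteq> b'" using ab' assms(7) by auto
  have MM: "M \<subseteq> {..<m}" "M' \<subseteq> {..<m}" using assms unfolding line_rep_def by auto
  have D1: "\<forall>i<m. (u!i \<noteq> v!i) = (i \<in> M)" using ab \<open>a\<noteq>b\<close> by auto
  have D2: "\<forall>i<m. (u!i \<noteq> v!i) = (i \<in> M')" using ab' \<open>a'\<noteq>b'\<close> by auto
  have "M = M'" using D1 D2 MM by blast
  have "\<forall>i<m. i \<notin> M \<longrightarrow> g i = g' i"
  proof (intro allI impI)
    fix i assume "i < m" "i \<notin> M"
    have "u!i = g i" using ab \<open>i<m\<close> \<open>i\<notin>M\<close> by simp
    moreover have "u!i = g' i" using ab' \<open>i<m\<close> \<open>i\<notin>M\<close> \<open>M=M'\<close> by simp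
    ultimately show "g i = g' i" by simp
  qed
  hence "line_pt m M g = line_pt m M' g'" using line_pt_cong \<open>M=M'\<close> by metis
  thus ?thesis using assms unfolding line_rep_def by auto
qed

locale amalg =
  fixes k m n :: nat and V :: "'v set" and E :: "'v set set"
    and P :: "nat list set" and psi :: "nat list \<Rightarrow> 'v" and x :: 'v
    and LL :: "nat list list set set"
    and Mr :: "nat list list set \<Rightarrow> nat set" and gr :: "nat list list set \<Rightarrow> nat \<Rightarrow> nat list"
  assumes k3: "k \<ge> 3"
    and unif: "uniform_hypergraph k V E"
    and K4: "k = 3 \<Longrightarrow> K4minus_free E"
    and pic: "picture k V E m P psi"
    and xV: "x \<in> V"
    and n1: "n \<ge> 1"
    and reps: "\<forall>U\<in>LL. line_rep {p\<in>P. psi p = x} n (Mr U) (gr U) U"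
    and ntp: "no_tripod LL Mr"
    and ntr: "no_triangle LL"
begin

abbreviation "Px \<equiv> {p\<in>P. psi p = x}"
abbreviation "eta U \<equiv> eta_plus n (Mr U) (gr U)"
abbreviation "bk j q \<equiv> blk m j q"
abbreviation "Q \<equiv> amalg_Q P n LL Mr gr"
abbreviation "psiS \<equiv> amalg_psi P psi n LL Mr gr"

lemma P_cube: "p \<in> P \<Longrightarrow> length p = m \<and> set p \<subseteq> {1..k}"
  using pic unfolding picture_def cube_def by auto

lemma P_len: "p \<in> P \<Longrightarrow> length p = m" using P_cube by blast

lemma rep: "U \<in> LL \<Longrightarrow> Mr U \<subseteq> {..<n} \<and> Mr U \<noteq> {} \<and> (\<forall>i<n. i \<notin> Mr U \<longrightarrow> gr U i \<in> Px)
   \<and> U = line_pt n (Mr U) (gr U) ` Px"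
  using reps unfolding line_rep_def by auto

lemma rep_M: "U \<in> LL \<Longrightarrow> Mr U \<subseteq> {..<n}" using rep by blast
lemma rep_ne: "U \<in> LL \<Longrightarrow> Mr U \<noteq> {}" using rep by blast
lemma rep_g: "U \<in> LL \<Longrightarrow> i < n \<Longrightarrow> i \<notin> Mr U \<Longrightarrow> gr U i \<in> P \<and> psi (gr U i) = x"
  using rep by blast
lemma rep_U: "U \<in> LL \<Longrightarrow> U = line_pt n (Mr U) (gr U) ` Px" using rep by blast

lemma gr_len: "U \<in> LL \<Longrightarrow> \<forall>i<n. i \<notin> Mr U \<longrightarrow> length (gr U i) = m"
  using rep_g P_len by blast

lemma eta_len': "U \<in> LL \<Longrightarrow> p \<in> P \<Longrightarrow> length (eta U p) = m*n"
  by (rule eta_len[OF P_len gr_len])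

lemma eta_blk': "U \<in> LL \<Longrightarrow> p \<in> P \<Longrightarrow> j < n \<Longrightarrow> bk j (eta U p) = (if j \<in> Mr U then p else gr U j)"
  by (rule eta_blk[OF P_len gr_len])

lemma eta_blk_P: "U \<in> LL \<Longrightarrow> p \<in> P \<Longrightarrow> j < n \<Longrightarrow> bk j (eta U p) \<in> P"
  using eta_blk' rep_g by auto

lemma eta_blk_x: "U \<in> LL \<Longrightarrow> p \<in> P \<Longrightarrow> j < n \<Longrightarrow> j \<notin> Mr U \<Longrightarrow> psi (bk j (eta U p)) = x"
  using eta_blk' rep_g by auto

lemma eta_set: "U \<in> LL \<Longrightarrow> p \<in> P \<Longrightarrow> set (eta U p) \<subseteq> {1..k}"
proof
  fix y assume U: "U \<in> LL" and p: "p \<in> P" and "y \<in> set (eta U p)"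
  then obtain i where i: "i < m*n" "eta U p ! i = y" using eta_len' by (metis in_set_conv_nth)
  hence m0: "m > 0" by (cases m) auto
  have j: "i div m < n" using i m0 by (simp add: less_mult_imp_div_less mult.commute)
  have t: "i mod m < m" using m0 by simp
  have "eta U p ! i = eta U p ! ((i div m)*m + i mod m)" by simp
  also have "\<dots> = (if i div m \<in> Mr U then p else gr U (i div m)) ! (i mod m)"
    using eta_nth[OF P_len[OF p] gr_len[OF U] j t] .
  finally have "y = (if i div m \<in> Mr U then p else gr U (i div m)) ! (i mod m)" using i by simp
  moreover have "(if i div m \<in> Mr U then p else gr U (i div m)) \<in> P" using rep_g[OF U] p j by auto
  ultimately show "y \<in> {1..k}"
  proof -
    assume a: "y = (if i div m \<in> Mr U then p else gr U (i div m)) ! (i mod m)"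
       and b: "(if i div m \<in> Mr U then p else gr U (i div m)) \<in> P"
    have "length (if i div m \<in> Mr U then p else gr U (i div m)) = m" using b P_len by blast
    hence "y \<in> set (if i div m \<in> Mr U then p else gr U (i div m))" using a t by simp
    thus ?thesis using P_cube[OF b] by blast
  qed
qed

lemma eta_inj: "U \<in> LL \<Longrightarrow> p \<in> P \<Longrightarrow> p' \<in> P \<Longrightarrow> eta U p = eta U p' \<Longrightarrow> p = p'"
proof -
  assume U: "U \<in> LL" and p: "p \<in> P" "p' \<in> P" and e: "eta U p = eta U p'"
  obtain j where j: "j \<in> Mr U" using rep_ne[OF U] rep_M[OF U] by blast
  hence "j < n" using rep_ne[OF U] rep_M[OF U] by blast
  have "p = bk j (eta U p)" using eta_blk'[OF U p(1) \<open>j<n\<close>] j by simp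
  also have "\<dots> = bk j (eta U p')" using e by (simp only:)
  also have "\<dots> = p'" using eta_blk'[OF U p(2) \<open>j<n\<close>] j by simp
  finally show "p = p'" .
qed

lemma psi_welldef:
  assumes U: "U \<in> LL" "U' \<in> LL" and p: "p \<in> P" "p' \<in> P" and e: "eta U p = eta U' p'"
  shows "psi p = psi p'"
proof (cases "Mr U \<inter> Mr U' = {}")
  case False
  then obtain j where j: "j \<in> Mr U" "j \<in> Mr U'" by blast
  hence "j < n" using rep_ne[OF U(1)] rep_M[OF U(1)] by blast
  have "p = bk j (eta U p)" using eta_blk'[OF U(1) p(1) \<open>j<n\<close>] j by simp
  also have "\<dots> = bk j (eta U' p')" using e by (simp only:)
  also have "\<dots> = p'" using eta_blk'[OF U(2) p(2) \<open>j<n\<close>] j by simp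
  finally show ?thesis by simp
next
  case True
  obtain j where j: "j \<in> Mr U" using rep_ne[OF U(1)] rep_M[OF U(1)] by blast
  hence "j < n" using rep_ne[OF U(1)] rep_M[OF U(1)] by blast
  have "j \<notin> Mr U'" using True j by blast
  have "p = bk j (eta U p)" using eta_blk'[OF U(1) p(1) \<open>j<n\<close>] j by simp
  also have "\<dots> = bk j (eta U' p')" using e by (simp only:)
  finally have "psi p = x" using eta_blk_x[OF U(2) p(2) \<open>j<n\<close> \<open>j \<notin> Mr U'\<close>] by simp
  obtain j' where j': "j' \<in> Mr U'" using rep_ne[OF U(2)] rep_M[OF U(2)] by blast
  hence "j' < n" using rep_ne[OF U(2)] rep_M[OF U(2)] by blast
  have "j' \<notin> Mr U" using True j' by blast
  have "p' = bk j' (eta U' p')" using eta_blk'[OF U(2) p(2) \<open>j'<n\<close>] j' by simp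
  also have "\<dots> = bk j' (eta U p)" using e by (simp only:)
  finally have "psi p' = x" using eta_blk_x[OF U(1) p(1) \<open>j'<n\<close> \<open>j' \<notin> Mr U\<close>] by simp
  show ?thesis using \<open>psi p = x\<close> \<open>psi p' = x\<close> by simp
qed

lemma psiS_eta: "U \<in> LL \<Longrightarrow> p \<in> P \<Longrightarrow> psiS (eta U p) = psi p"
proof -
  assume U: "U \<in> LL" and p: "p \<in> P"
  let ?R = "\<lambda>v. \<exists>U'\<in>LL. \<exists>p'\<in>P. eta U p = eta U' p' \<and> v = psi p'"
  have "?R (psi p)" using U p by blast
  hence "?R (SOME v. ?R v)" by (rule someI)
  then obtain U' p' where U': "U' \<in> LL" "p' \<in> P" "eta U p = eta U' p'" "(SOME v. ?R v) = psi p'" by blast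
  have "psi p = psi p'" by (rule psi_welldef[OF U U'(1) p U'(2) U'(3)])
  moreover have "psiS (eta U p) = (SOME v. ?R v)" by (simp only: amalg_psi_def)
  ultimately show ?thesis using U'(4) by simp
qed

lemma Q_cube: "Q \<subseteq> cube {1..k} (m*n)"
proof
  fix q assume "q \<in> Q"
  then obtain U p where "U \<in> LL" "p \<in> P" "q = eta U p" unfolding amalg_Q_def by blast
  thus "q \<in> cube {1..k} (m*n)" unfolding cube_def using eta_len' eta_set by blast
qed

lemma psiS_V: "q \<in> Q \<Longrightarrow> psiS q \<in> V"
  proof -
  assume "q \<in> Q"
  then obtain U p where "U \<in> LL" "p \<in> P" "q = eta U p" unfolding amalg_Q_def by blast
  thus ?thesis using psiS_eta pic unfolding picture_def by auto
qed

end

lemma idx_lt: "j < n \<Longrightarrow> t < (m::nat) \<Longrightarrow> j*m+t < m*n"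
proof -
  assume "j < n" "t < m"
  have "(j+1)*m \<le> n*m" using \<open>j<n\<close> by (intro mult_le_mono1) simp
  thus ?thesis using \<open>t<m\<close> by (simp add: algebra_simps)
qed

locale ql = amalg +
  fixes L :: "nat list set"
  assumes qlL: "quasiline k (m*n) L" and LQ: "L \<subseteq> Q"
begin

definition Uf where "Uf q = (SOME U. U \<in> LL \<and> (\<exists>p\<in>P. q = eta U p))"
definition pf where "pf q = (SOME p. p \<in> P \<and> q = eta (Uf q) p)"
abbreviation "Mq q \<equiv> Mr (Uf q)"

lemma UFP: "q \<in> L \<Longrightarrow> Uf q \<in> LL \<and> pf q \<in> P \<and> q = eta (Uf q) (pf q)"
proof -
  assume "q \<in> L"
  hence "\<exists>U. U \<in> LL \<and> (\<exists>p\<in>P. q = eta U p)" using LQ unfolding amalg_Q_def by blast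
  hence 1: "Uf q \<in> LL \<and> (\<exists>p\<in>P. q = eta (Uf q) p)" unfolding Uf_def by (rule someI_ex)
  hence "\<exists>p. p \<in> P \<and> q = eta (Uf q) p" by blast
  hence "pf q \<in> P \<and> q = eta (Uf q) (pf q)" unfolding pf_def by (rule someI_ex)
  thus ?thesis using 1 by blast
qed

lemma Uf_LL: "q \<in> L \<Longrightarrow> Uf q \<in> LL" using UFP by blast
lemma pf_P: "q \<in> L \<Longrightarrow> pf q \<in> P" using UFP by blast
lemma q_eta: "q \<in> L \<Longrightarrow> q = eta (Uf q) (pf q)" using UFP by blast

lemma L_card: "card L = k" using qlL unfolding quasiline_def by blast
lemma L_fin: "finite L" using L_card k3 by (metis card.infinite not_numeral_le_zero)
lemma L_len: "q \<in> L \<Longrightarrow> length q = m*n" using qlL unfolding quasiline_def cube_def by blast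
lemma L_coord: "i < m*n \<Longrightarrow> (\<forall>p\<in>L. \<forall>q\<in>L. p ! i = q ! i) \<or> inj_on (\<lambda>p. p ! i) L"
  using qlL unfolding quasiline_def by blast

lemma bk_rep: "q \<in> L \<Longrightarrow> j < n \<Longrightarrow> bk j q = (if j \<in> Mq q then pf q else gr (Uf q) j)"
  using eta_blk'[OF Uf_LL pf_P] q_eta by metis

lemma bk_x: "q \<in> L \<Longrightarrow> j < n \<Longrightarrow> j \<notin> Mq q \<Longrightarrow> psi (bk j q) = x"
  using eta_blk_x[OF Uf_LL pf_P] q_eta by metis

lemma bk_P: "q \<in> L \<Longrightarrow> j < n \<Longrightarrow> bk j q \<in> P"
  using eta_blk_P[OF Uf_LL pf_P] q_eta by metis

lemma bk_nth: "t < m \<Longrightarrow> bk j q ! t = q ! (j*m+t)" by (simp add: blk_def)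
lemma bk_len: "length (bk j q) = m" by (simp add: blk_def)

lemma blk_dich: "j < n \<Longrightarrow> (\<forall>q\<in>L. \<forall>q'\<in>L. bk j q = bk j q') \<or> inj_on (bk j) L"
proof (rule disjCI)
  assume j: "j < n" and ni: "\<not> inj_on (bk j) L"
  then obtain q0 q0' where q0: "q0 \<in> L" "q0' \<in> L" "q0 \<noteq> q0'" "bk j q0 = bk j q0'"
    unfolding inj_on_def by blast
  show "\<forall>q\<in>L. \<forall>q'\<in>L. bk j q = bk j q'"
  proof (intro ballI)
    fix q q' assume qq: "q \<in> L" "q' \<in> L"
    show "bk j q = bk j q'"
    proof (rule nth_equalityI)
      show "length (bk j q) = length (bk j q')" by (simp add: bk_len)
      fix t assume "t < length (bk j q)"
      hence t: "t < m" by (simp add: bk_len)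
      have i: "j*m+t < m*n" using idx_lt j t .
      have "q0 ! (j*m+t) = q0' ! (j*m+t)" using q0(4) bk_nth[OF t] by metis
      hence "\<not> inj_on (\<lambda>p. p ! (j*m+t)) L" using q0 unfolding inj_on_def by blast
      hence "\<forall>p\<in>L. \<forall>q\<in>L. p ! (j*m+t) = q ! (j*m+t)" using L_coord[OF i] by blast
      thus "bk j q ! t = bk j q' ! t" using qq bk_nth[OF t] by metis
    qed
  qed
qed

definition J where "J = {j. j < n \<and> inj_on (bk j) L}"

lemma J_lt: "j \<in> J \<Longrightarrow> j < n" unfolding J_def by blast
lemma J_inj: "j \<in> J \<Longrightarrow> inj_on (bk j) L" unfolding J_def by blast
lemma notJ_const: "j < n \<Longrightarrow> j \<notin> J \<Longrightarrow> q \<in> L \<Longrightarrow> q' \<in> L \<Longrightarrow> bk j q = bk j q'"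
  using blk_dich unfolding J_def by blast

lemma Lj_ql: "j \<in> J \<Longrightarrow> quasiline k m (bk j ` L)"
proof -
  assume jJ: "j \<in> J"
  have j: "j < n" using J_lt[OF jJ] .
  have inj: "inj_on (bk j) L" using J_inj[OF jJ] .
  have sub: "bk j ` L \<subseteq> cube {1..k} m" using bk_P[OF _ j] pic unfolding picture_def by blast
  have card: "card (bk j ` L) = k" using card_image[OF inj] L_card by simp
  have coord: "\<forall>t<m. (\<forall>p\<in>bk j ` L. \<forall>q\<in>bk j ` L. p ! t = q ! t) \<or> inj_on (\<lambda>p. p ! t) (bk j ` L)"
  proof (intro allI impI)
    fix t assume t: "t < m"
    have i: "j*m+t < m*n" using idx_lt j t .
    show "(\<forall>p\<in>bk j ` L. \<forall>q\<in>bk j ` L. p ! t = q ! t) \<or> inj_on (\<lambda>p. p ! t) (bk j ` L)"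
    proof (cases "\<forall>p\<in>L. \<forall>q\<in>L. p ! (j*m+t) = q ! (j*m+t)")
      case True
      have "\<forall>u\<in>bk j ` L. \<forall>v\<in>bk j ` L. u!t = v!t"
      proof (intro ballI)
        fix u v assume "u \<in> bk j ` L" "v \<in> bk j ` L"
        then obtain q q' where qq: "q \<in> L" "q' \<in> L" "u = bk j q" "v = bk j q'" by blast
        have "q ! (j*m+t) = q' ! (j*m+t)" using True qq by blast
        thus "u!t = v!t" using qq(3,4) bk_nth[OF t] by metis
      qed
      then show ?thesis by blast
    next
      case False
      hence ii: "inj_on (\<lambda>p. p ! (j*m+t)) L" using L_coord[OF i] by blast
      have "inj_on (\<lambda>p. p ! t) (bk j ` L)"
      proof (rule inj_onI)
        fix u v assume "u \<in> bk j ` L" "v \<in> bk j ` L" "u ! t = v ! t"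
        then obtain q q' where "q \<in> L" "q' \<in> L" "u = bk j q" "v = bk j q'" "u!t = v!t" by blast
        hence "q ! (j*m+t) = q' ! (j*m+t)" using bk_nth[OF t] by metis
        hence "q = q'" using ii \<open>q\<in>L\<close> \<open>q'\<in>L\<close> unfolding inj_on_def by blast
        thus "u = v" using \<open>u = bk j q\<close> \<open>v = bk j q'\<close> by simp
      qed
      thus ?thesis by blast
    qed
  qed
  show ?thesis unfolding quasiline_def using sub card coord by blast
qed

lemma Lj_line: "j \<in> J \<Longrightarrow> comb_line {1..k} m (bk j ` L) \<and> psi ` (bk j ` L) \<in> E"
proof -
  assume jJ: "j \<in> J"
  have "bk j ` L \<subseteq> P" using bk_P J_lt[OF jJ] by blast
  thus ?thesis using pic Lj_ql[OF jJ] unfolding picture_def by blast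
qed

lemma Lj_psi_inj: "j \<in> J \<Longrightarrow> inj_on psi (bk j ` L)"
proof -
  assume jJ: "j \<in> J"
  have "card (psi ` (bk j ` L)) = k" using Lj_line[OF jJ] unif unfolding uniform_hypergraph_def by blast
  moreover have "card (bk j ` L) = k" using card_image[OF J_inj[OF jJ]] L_card by simp
  moreover have "finite (bk j ` L)" using L_fin by simp
  ultimately show ?thesis using inj_on_iff_eq_card by metis
qed

lemma X_unique: "j \<in> J \<Longrightarrow> q \<in> L \<Longrightarrow> q' \<in> L \<Longrightarrow> psi (bk j q) = x \<Longrightarrow> psi (bk j q') = x \<Longrightarrow> q = q'"
proof -
  assume a: "j \<in> J" "q \<in> L" "q' \<in> L" "psi (bk j q) = x" "psi (bk j q') = x"
  have "bk j q = bk j q'" using Lj_psi_inj[OF a(1)] a unfolding inj_on_def by auto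
  thus "q = q'" using J_inj[OF a(1)] a unfolding inj_on_def by blast
qed

lemma avoid: "finite F \<Longrightarrow> card F < k \<Longrightarrow> \<exists>q\<in>L. q \<notin> F"
proof (rule ccontr)
  assume "finite F" "card F < k" "\<not> (\<exists>q\<in>L. q \<notin> F)"
  hence "L \<subseteq> F" by blast
  hence "card L \<le> card F" using card_mono \<open>finite F\<close> by blast
  thus False using L_card \<open>card F < k\<close> by simp
qed

lemma avoid1: "\<exists>q\<in>L. q \<noteq> a"
  using avoid[of "{a}"] k3 by auto

lemma avoid2: "\<exists>q\<in>L. q \<noteq> a \<and> q \<noteq> b"
proof -
  have "card {a,b} \<le> 2" by (simp add: card_insert_le_m1)
  thus ?thesis using avoid[of "{a,b}"] k3 by auto
qed

lemma avoid3: "k \<ge> 4 \<Longrightarrow> \<exists>q\<in>L. q \<noteq> a \<and> q \<noteq> b \<and> q \<noteq> c"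
proof -
  assume "k \<ge> 4"
  have "card {a,b,c} \<le> 3" by (simp add: card_insert_le_m1)
  thus ?thesis using avoid[of "{a,b,c}"] \<open>k \<ge> 4\<close> by auto
qed

lemma two_pts: "\<exists>q1 q2. q1 \<in> L \<and> q2 \<in> L \<and> q1 \<noteq> q2"
proof -
  obtain a where "a \<in> L" using avoid1 by blast
  thus ?thesis using avoid1[of a] by blast
qed

lemma J_ne: "J \<noteq> {}"
proof
  assume J0: "J = {}"
  obtain q1 q2 where q: "q1 \<in> L" "q2 \<in> L" "q1 \<noteq> q2" using two_pts by blast
  have "q1 = q2"
  proof (rule blk_eqI[where m=m and n=n])
    show "length q1 = m*n" "length q2 = m*n" using L_len q by auto
    show "\<forall>j<n. bk j q1 = bk j q2" using notJ_const q J0 by blast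
  qed
  thus False using q by blast
qed

lemma GEO:
  assumes j: "j \<in> J" "j' \<in> J" and q: "q1 \<in> L" "q2 \<in> L" "q1 \<noteq> q2"
    and e: "bk j q1 = bk j' q1" "bk j q2 = bk j' q2"
  shows "bk j ` L = bk j' ` L"
proof -
  obtain M g where 1: "line_rep {1..k} m M g (bk j ` L)" using Lj_line[OF j(1)] unfolding comb_line_def by blast
  obtain M' g' where 2: "line_rep {1..k} m M' g' (bk j' ` L)" using Lj_line[OF j(2)] unfolding comb_line_def by blast
  have ne: "bk j q1 \<noteq> bk j q2" using J_inj[OF j(1)] q unfolding inj_on_def by blast
  show ?thesis by (rule line_two_points[OF 1 2, of "bk j q1" "bk j q2"]) (use q e ne in \<open>auto intro: image_eqI[where x=q1] image_eqI[where x=q2] simp del: e\<close>)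
qed

end

context ql begin

lemma pfx_all: "q \<in> L \<Longrightarrow> psi (pf q) = x \<Longrightarrow> j < n \<Longrightarrow> psi (bk j q) = x"
  using bk_rep bk_x by metis

lemma sameU:
  assumes q: "q \<in> L" "q' \<in> L" and M: "Mq q = Mq q'" and g: "\<forall>j<n. j \<notin> Mq q \<longrightarrow> bk j q = bk j q'"
  shows "Uf q = Uf q'"
proof -
  have "\<forall>j<n. j \<notin> Mq q \<longrightarrow> gr (Uf q) j = gr (Uf q') j"
    using g bk_rep[OF q(1)] bk_rep[OF q(2)] M by metis
  hence "line_pt n (Mq q) (gr (Uf q)) = line_pt n (Mq q') (gr (Uf q'))" using line_pt_cong M by metis
  thus ?thesis using rep_U[OF Uf_LL[OF q(1)]] rep_U[OF Uf_LL[OF q(2)]] by metis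
qed

lemma in_etaP: "q \<in> L \<Longrightarrow> q \<in> eta (Uf q) ` P"
  using q_eta pf_P by blast

lemma caseI:
  assumes q0: "q0 \<in> L" "psi (pf q0) = x"
  shows "\<exists>U\<in>LL. L \<subseteq> eta U ` P"
proof -
  obtain j0 where j0: "j0 \<in> J" using J_ne by blast
  have h1: "psi (pf q) \<noteq> x" if "q \<in> L" "q \<noteq> q0" for q
  proof
    assume "psi (pf q) = x"
    hence "psi (bk j0 q) = x" using pfx_all that J_lt[OF j0] by blast
    moreover have "psi (bk j0 q0) = x" using pfx_all q0 J_lt[OF j0] by blast
    ultimately show False using X_unique[OF j0 that(1) q0(1)] that by blast
  qed
  have h2: "Mq q = J" if q: "q \<in> L" "q \<noteq> q0" for q
  proof
    show "J \<subseteq> Mq q"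
    proof
      fix j assume j: "j \<in> J"
      show "j \<in> Mq q"
      proof (rule ccontr)
        assume "j \<notin> Mq q"
        hence "psi (bk j q) = x" using bk_x q J_lt[OF j] by blast
        moreover have "psi (bk j q0) = x" using pfx_all q0 J_lt[OF j] by blast
        ultimately show False using X_unique[OF j q(1) q0(1)] q by blast
      qed
    qed
    show "Mq q \<subseteq> J"
    proof
      fix j assume j: "j \<in> Mq q"
      have jn: "j < n" using rep_M[OF Uf_LL[OF q(1)]] j by blast
      show "j \<in> J"
      proof (rule ccontr)
        assume "j \<notin> J"
        hence "bk j q = bk j q0" using notJ_const jn q q0 by blast
        moreover have "bk j q = pf q" using bk_rep[OF q(1) jn] j by simp
        moreover have "psi (bk j q0) = x" using pfx_all q0 jn by blast
        ultimately have "psi (pf q) = x" by simp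
        thus False using h1 q by blast
      qed
    qed
  qed
  obtain q1 where q1: "q1 \<in> L" "q1 \<noteq> q0" using avoid1 by blast
  define U where "U = Uf q1"
  have U: "U \<in> LL" using Uf_LL q1 U_def by blast
  have MU: "Mr U = J" using h2 q1 U_def by blast
  have h3: "Uf q = U" if q: "q \<in> L" "q \<noteq> q0" for q
    unfolding U_def
  proof (rule sameU[OF q(1) q1(1)])
    show "Mq q = Mq q1" using h2 q q1 by simp
    show "\<forall>j<n. j \<notin> Mq q \<longrightarrow> bk j q = bk j q1" using notJ_const h2 q q1 by metis
  qed
  obtain j1 where j1: "j1 \<in> J" using J_ne by blast
  define a where "a = bk j1 q0"
  have aP: "a \<in> P" using bk_P q0 J_lt[OF j1] a_def by blast
  obtain q2 where q2: "q2 \<in> L" "q2 \<noteq> q0" "q2 \<noteq> q1" using avoid2 by blast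
  have "q0 = eta U a"
  proof (rule blk_eqI[where m=m and n=n])
    show "length q0 = m*n" using L_len q0 by blast
    show "length (eta U a) = m*n" using eta_len'[OF U aP] .
    show "\<forall>j<n. bk j q0 = bk j (eta U a)"
    proof (intro allI impI)
      fix j assume jn: "j < n"
      have e: "bk j (eta U a) = (if j \<in> J then a else gr U j)" using eta_blk'[OF U aP jn] MU by simp
      show "bk j q0 = bk j (eta U a)"
      proof (cases "j \<in> J")
        case True
        have "bk j q1 = pf q1" using bk_rep[OF q1(1) jn] h2 q1 True by simp
        moreover have "bk j1 q1 = pf q1" using bk_rep[OF q1(1) J_lt[OF j1]] h2 q1 j1 by simp
        moreover have "bk j q2 = pf q2" using bk_rep[OF q2(1) jn] h2 q2 True by simp
        moreover have "bk j1 q2 = pf q2" using bk_rep[OF q2(1) J_lt[OF j1]] h2 q2 j1 by simp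
        ultimately have eqL: "bk j ` L = bk j1 ` L" using GEO[OF True j1 q1(1) q2(1)] q2 by metis
        have "bk j q0 \<in> bk j1 ` L" using eqL q0 by blast
        then obtain q' where q': "q' \<in> L" "bk j q0 = bk j1 q'" by blast
        have px: "psi (bk j q0) = x" using pfx_all q0 jn by blast
        have "q' = q0"
        proof (rule ccontr)
          assume "q' \<noteq> q0"
          hence "bk j1 q' = pf q'" using bk_rep[OF q'(1) J_lt[OF j1]] h2 q'(1) j1 by simp
          thus False using px q' h1 \<open>q' \<noteq> q0\<close> by simp
        qed
        thus ?thesis using q' e True a_def by simp
      next
        case False
        have "bk j q0 = bk j q1" using notJ_const jn False q0 q1 by blast
        also have "\<dots> = gr U j" using bk_rep[OF q1(1) jn] h2 q1 False U_def by simp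
        finally show ?thesis using e False by simp
      qed
    qed
  qed
  hence "q0 \<in> eta U ` P" using aP by blast
  moreover have "q \<in> eta U ` P" if "q \<in> L" "q \<noteq> q0" for q using in_etaP h3 that by metis
  ultimately show ?thesis using U by blast
qed

end

locale ql2 = ql +
  assumes hx: "\<forall>q\<in>L. psi (pf q) \<noteq> x"
begin

lemma X_iff: "q \<in> L \<Longrightarrow> j < n \<Longrightarrow> psi (bk j q) = x \<longleftrightarrow> j \<notin> Mq q"
  using bk_rep bk_x hx by metis

lemma uniq: "j \<in> J \<Longrightarrow> q \<in> L \<Longrightarrow> q' \<in> L \<Longrightarrow> j \<notin> Mq q \<Longrightarrow> j \<notin> Mq q' \<Longrightarrow> q = q'"
  using X_unique X_iff J_lt by metis

lemma bkM: "q \<in> L \<Longrightarrow> j \<in> Mq q \<Longrightarrow> bk j q = pf q"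
  using bk_rep rep_M Uf_LL by (metis lessThan_iff subsetD)

lemma uniqM: "j \<in> J \<Longrightarrow> q \<in> L \<Longrightarrow> q' \<in> L \<Longrightarrow> j \<notin> Mq q \<Longrightarrow> q' \<noteq> q \<Longrightarrow> j \<in> Mq q'"
  using uniq by blast

lemma two_in: "j \<in> J \<Longrightarrow> \<exists>a b. a \<in> L \<and> b \<in> L \<and> a \<noteq> b \<and> j \<in> Mq a \<and> j \<in> Mq b"
proof -
  assume j: "j \<in> J"
  obtain a where a: "a \<in> L" using avoid1 by blast
  obtain b where b: "b \<in> L" "b \<noteq> a" using avoid1 by blast
  obtain c where c: "c \<in> L" "c \<noteq> a" "c \<noteq> b" using avoid2 by blast
  show ?thesis
  proof (cases "j \<in> Mq a")
    case True
    show ?thesis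
    proof (cases "j \<in> Mq b")
      case True
      then show ?thesis using \<open>j \<in> Mq a\<close> a b by blast
    next
      case False
      then show ?thesis using uniqM[OF j b(1) c(1) False] c a \<open>j \<in> Mq a\<close> by blast
    qed
  next
    case False
    have "j \<in> Mq b" using uniqM[OF j a b(1) False] b by blast
    moreover have "j \<in> Mq c" using uniqM[OF j a c(1) False] c by blast
    ultimately show ?thesis using b c by blast
  qed
qed

lemma MsubJ: "q \<in> L \<Longrightarrow> Mq q \<subseteq> J"
proof
  fix j assume q: "q \<in> L" and j: "j \<in> Mq q"
  have jn: "j < n" using rep_M[OF Uf_LL[OF q]] j by blast
  show "j \<in> J"
  proof (rule ccontr)
    assume nJ: "j \<notin> J"
    have all: "j \<in> Mq q' \<and> pf q' = pf q" if q': "q' \<in> L" for q'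
    proof -
      have e: "bk j q' = pf q" using notJ_const[OF jn nJ q' q] bkM[OF q j] by simp
      have "psi (bk j q') \<noteq> x" using e hx q by simp
      hence "j \<in> Mq q'" using X_iff q' jn by blast
      thus ?thesis using bkM[OF q'] e by simp
    qed
    obtain j1 where j1: "j1 \<in> J" using J_ne by blast
    obtain a b where ab: "a \<in> L" "b \<in> L" "a \<noteq> b" "j1 \<in> Mq a" "j1 \<in> Mq b" using two_in[OF j1] by blast
    have "bk j1 a = bk j1 b" using bkM ab all by metis
    thus False using J_inj[OF j1] ab unfolding inj_on_def by blast
  qed
qed

lemma excl_const:
  assumes q: "q \<in> L" and j: "j \<in> J" "j' \<in> J" "j \<notin> Mq q" "j' \<notin> Mq q"
  shows "bk j q = bk j' q"
proof -
  obtain b where b: "b \<in> L" "b \<noteq> q" using avoid1 by blast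
  obtain c where c: "c \<in> L" "c \<noteq> q" "c \<noteq> b" using avoid2 by blast
  have "j \<in> Mq b" "j' \<in> Mq b" "j \<in> Mq c" "j' \<in> Mq c" using uniqM q j b c by blast+
  hence "bk j b = bk j' b" "bk j c = bk j' c" using bkM b c by metis+
  hence eqL: "bk j ` L = bk j' ` L" using GEO[OF j(1,2) b(1) c(1)] c by metis
  have "bk j q \<in> bk j' ` L" using eqL q by blast
  then obtain q' where q': "q' \<in> L" "bk j q = bk j' q'" by blast
  have px: "psi (bk j q) = x" using X_iff q J_lt[OF j(1)] j(3) by blast
  have "q' = q"
  proof (rule ccontr)
    assume "q' \<noteq> q"
    hence "j' \<in> Mq q'" using uniqM q j q' by blast
    hence "psi (bk j' q') \<noteq> x" using X_iff q' J_lt[OF j(2)] by blast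
    thus False using px q' by simp
  qed
  thus ?thesis using q' by simp
qed

lemma notype0: "j \<in> J \<Longrightarrow> q1 \<in> L \<Longrightarrow> j1 \<in> J \<Longrightarrow> j1 \<notin> Mq q1 \<Longrightarrow> \<exists>q\<in>L. j \<notin> Mq q"
proof (rule ccontr)
  assume j: "j \<in> J" and q1: "q1 \<in> L" and j1: "j1 \<in> J" "j1 \<notin> Mq q1" and c: "\<not> (\<exists>q\<in>L. j \<notin> Mq q)"
  obtain b where b: "b \<in> L" "b \<noteq> q1" using avoid1 by blast
  obtain c where cc: "c \<in> L" "c \<noteq> q1" "c \<noteq> b" using avoid2 by blast
  have "j1 \<in> Mq b" "j1 \<in> Mq c" using uniqM q1 j1 b cc by blast+
  moreover have "j \<in> Mq b" "j \<in> Mq c" using c b cc by blast+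
  ultimately have "bk j1 b = bk j b" "bk j1 c = bk j c" using bkM b cc by metis+
  hence eqL: "bk j1 ` L = bk j ` L" using GEO[OF j1(1) j b(1) cc(1)] cc by metis
  have "bk j1 q1 \<in> bk j ` L" using eqL q1 by blast
  then obtain q' where q': "q' \<in> L" "bk j1 q1 = bk j q'" by blast
  have "psi (bk j1 q1) = x" using X_iff q1 J_lt[OF j1(1)] j1 by blast
  moreover have "psi (bk j q') \<noteq> x" using X_iff q' J_lt[OF j] c by blast
  ultimately show False using q' by simp
qed

end

lemma card3: "card {a,b,c} = 3 \<Longrightarrow> a \<noteq> b \<and> a \<noteq> c \<and> b \<noteq> c"
  by (auto simp: card_insert_if split: if_splits)

lemma card4: "a \<noteq> b \<Longrightarrow> a \<noteq> c \<Longrightarrow> a \<noteq> d \<Longrightarrow> b \<noteq> c \<Longrightarrow> b \<noteq> d \<Longrightarrow> c \<noteq> d \<Longrightarrow> card {a,b,c,d} = 4"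
  by simp

context ql2 begin

lemma caseIIa:
  assumes q: "q1 \<in> L" "q2 \<in> L" "q3 \<in> L" "q1 \<noteq> q2" "q1 \<noteq> q3" "q2 \<noteq> q3"
    and j: "j1 \<in> J" "j2 \<in> J" "j3 \<in> J" "j1 \<notin> Mq q1" "j2 \<notin> Mq q2" "j3 \<notin> Mq q3"
  shows False
proof (cases "k = 3")
  case True
  have sub: "{q1,q2,q3} \<subseteq> L" using q by blast
  have "card {q1,q2,q3} = 3" using q by simp
  hence Leq: "L = {q1,q2,q3}" using card_subset_eq[OF L_fin sub] L_card True by simp
  define v1 where "v1 = psi (pf q1)"
  define v2 where "v2 = psi (pf q2)"
  define v3 where "v3 = psi (pf q3)"
  have M: "j1 \<in> Mq q2" "j1 \<in> Mq q3" "j2 \<in> Mq q1" "j2 \<in> Mq q3" "j3 \<in> Mq q1" "j3 \<in> Mq q2"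
    using uniqM q j by metis+
  have X: "psi (bk j1 q1) = x" "psi (bk j2 q2) = x" "psi (bk j3 q3) = x"
    using X_iff q j J_lt by blast+
  have e1: "psi ` bk j1 ` L = {x, v2, v3}" using Leq X M bkM q v2_def v3_def by simp
  have e2: "psi ` bk j2 ` L = {v1, x, v3}" using Leq X M bkM q v1_def v3_def by simp
  have e3: "psi ` bk j3 ` L = {v1, v2, x}" using Leq X M bkM q v1_def v2_def by simp
  have E1: "{x,v2,v3} \<in> E" "{v1,x,v3} \<in> E" "{v1,v2,x} \<in> E"
    using Lj_line j e1 e2 e3 by metis+
  have c: "card {x,v2,v3} = 3" "card {v1,x,v3} = 3" "card {v1,v2,x} = 3"
    using E1 unif True unfolding uniform_hypergraph_def by blast+
  have d: "x \<noteq> v2" "x \<noteq> v3" "v2 \<noteq> v3" "v1 \<noteq> x" "v1 \<noteq> v3" "v1 \<noteq> v2"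
    using card3[OF c(1)] card3[OF c(2)] card3[OF c(3)] by blast+
  define S where "S = {x,v1,v2,v3}"
  have cS: "card S = 4" unfolding S_def using d card4 by metis
  have sub2: "{{x,v2,v3},{v1,x,v3},{v1,v2,x}} \<subseteq> {e\<in>E. e \<subseteq> S}" using E1 unfolding S_def by auto
  have fin: "finite {e\<in>E. e \<subseteq> S}" unfolding S_def by (rule finite_subset[of _ "Pow {x,v1,v2,v3}"]) auto
  have ne: "{x,v2,v3} \<noteq> {v1,x,v3}" "{x,v2,v3} \<noteq> {v1,v2,x}" "{v1,x,v3} \<noteq> {v1,v2,x}"
    using d by (auto simp: insert_eq_iff)
  have "card {{x,v2,v3},{v1,x,v3},{v1,v2,x}} = 3" using ne by simp
  hence "3 \<le> card {e\<in>E. e \<subseteq> S}" using card_mono[OF fin sub2] by simp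
  thus False using K4[OF True] cS unfolding K4minus_free_def by blast
next
  case False
  hence k4: "k \<ge> 4" using k3 by simp
  obtain qa where qa: "qa \<in> L" "qa \<noteq> q1" "qa \<noteq> q2" using avoid2 by blast
  obtain qb where qb: "qb \<in> L" "qb \<noteq> q1" "qb \<noteq> q2" "qb \<noteq> qa" using avoid3[OF k4] by blast
  have "j1 \<in> Mq qa" "j1 \<in> Mq qb" "j2 \<in> Mq qa" "j2 \<in> Mq qb" using uniqM q j qa qb by metis+
  hence "bk j1 qa = bk j2 qa" "bk j1 qb = bk j2 qb" using bkM qa qb by metis+
  hence eqL: "bk j1 ` L = bk j2 ` L" using GEO[OF j(1,2) qa(1) qb(1)] qb by metis
  have j2q1: "j2 \<in> Mq q1" using uniqM q j by metis
  have "pf q1 \<in> bk j1 ` L" using eqL bkM[OF q(1) j2q1] q(1) by (metis imageI)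
  then obtain q' where q': "q' \<in> L" "bk j1 q' = pf q1" by (metis imageE)
  have "q' \<noteq> q1"
  proof
    assume "q' = q1"
    hence "psi (pf q1) = x" using q' X_iff q j J_lt by metis
    thus False using hx q by blast
  qed
  hence "j1 \<in> Mq q'" using uniqM q j q' by metis
  hence pfe: "pf q' = pf q1" using bkM q' by metis
  show False
  proof (cases "q' = q2")
    case False
    have "j2 \<in> Mq q'" using uniqM q j q' False by metis
    hence "bk j2 q' = bk j2 q1" using bkM q' q j2q1 pfe by metis
    thus False using J_inj[OF j(2)] q' q \<open>q' \<noteq> q1\<close> unfolding inj_on_def by blast
  next
    case True
    have "j3 \<in> Mq q'" "j3 \<in> Mq q1" using uniqM q j q' True by metis+
    hence "bk j3 q' = bk j3 q1" using bkM q' q pfe by metis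
    thus False using J_inj[OF j(3)] q' q \<open>q' \<noteq> q1\<close> unfolding inj_on_def by blast
  qed
qed

end

context ql2 begin

lemma caseIIb:
  assumes q: "q1 \<in> L" "q2 \<in> L" "q3 \<in> L" "q1 \<noteq> q2" "q1 \<noteq> q3" "q2 \<noteq> q3"
    and j: "j1 \<in> J" "j2 \<in> J" "j1 \<notin> Mq q1" "j2 \<notin> Mq q2"
    and allJ: "\<forall>q\<in>L. q \<noteq> q1 \<and> q \<noteq> q2 \<longrightarrow> Mq q = J"
  shows False
proof -
  define D1 where "D1 = J - Mq q1"
  define D2 where "D2 = J - Mq q2"
  have part: "j \<in> D1 \<or> j \<in> D2" if jJ: "j \<in> J" for j
  proof -
    obtain q where "q \<in> L" "j \<notin> Mq q" using notype0[OF jJ q(1) j(1) j(3)] by blast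
    hence "q = q1 \<or> q = q2" using allJ jJ by blast
    thus ?thesis using \<open>j \<notin> Mq q\<close> jJ unfolding D1_def D2_def by blast
  qed
  have disj: "D1 \<inter> D2 = {}" using uniq q unfolding D1_def D2_def by blast
  have M1: "Mq q1 = D2"
  proof (intro equalityI subsetI)
    fix i assume i: "i \<in> Mq q1"
    hence "i \<in> J" using MsubJ[OF q(1)] by blast
    moreover have "i \<notin> D1" using i unfolding D1_def by blast
    ultimately show "i \<in> D2" using part by blast
  next
    fix i assume i: "i \<in> D2"
    hence "i \<notin> D1" "i \<in> J" using disj unfolding D2_def by blast+
    thus "i \<in> Mq q1" unfolding D1_def by blast
  qed
  have M2: "Mq q2 = D1"
  proof (intro equalityI subsetI)
    fix i assume i: "i \<in> Mq q2"
    hence "i \<in> J" using MsubJ[OF q(2)] by blast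
    moreover have "i \<notin> D2" using i unfolding D2_def by blast
    ultimately show "i \<in> D1" using part by blast
  next
    fix i assume i: "i \<in> D1"
    hence "i \<notin> D2" "i \<in> J" using disj unfolding D1_def by blast+
    thus "i \<in> Mq q2" unfolding D2_def by blast
  qed
  have M3: "Mq q3 = J" using allJ q(3) q(5) q(6) by auto
  have j1D: "j1 \<in> D1" "j1 \<notin> D2" using j disj unfolding D1_def by blast+
  have j2D: "j2 \<in> D2" "j2 \<notin> D1" using j disj unfolding D2_def by blast+
  have Jn: "J \<subseteq> {..<n}" using J_lt by blast
  define a1 where "a1 = bk j1 q1"
  define a2 where "a2 = bk j2 q2"
  have a1c: "bk j q1 = a1" if "j \<in> D1" for j
    using excl_const[OF q(1)] that j unfolding a1_def D1_def by blast
  have a2c: "bk j q2 = a2" if "j \<in> D2" for j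
    using excl_const[OF q(2)] that j unfolding a2_def D2_def by blast
  have a1P: "a1 \<in> Px" using bk_P[OF q(1) J_lt[OF j(1)]] X_iff[OF q(1) J_lt[OF j(1)]] j unfolding a1_def by blast
  have a2P: "a2 \<in> Px" using bk_P[OF q(2) J_lt[OF j(2)]] X_iff[OF q(2) J_lt[OF j(2)]] j unfolding a2_def by blast
  have grb: "gr (Uf q) i = bk i q" if "q \<in> L" "i < n" "i \<notin> Mq q" for q i
    using bk_rep[OF that(1,2)] that(3) by simp
  have cst: "bk i q = bk i q3" if "q \<in> L" "i < n" "i \<notin> J" for q i
    using notJ_const that q by blast
  define z where "z s t = map (\<lambda>i. if i \<in> D1 then s else if i \<in> D2 then t else bk i q3) [0..<n]" for s t
  have z1: "z a1 t = line_pt n (Mq q1) (gr (Uf q1)) t" for t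
  proof (rule nth_equalityI)
    show "length (z a1 t) = length (line_pt n (Mq q1) (gr (Uf q1)) t)" by (simp add: z_def)
    fix i assume "i < length (z a1 t)"
    hence i: "i < n" by (simp add: z_def)
    show "z a1 t ! i = line_pt n (Mq q1) (gr (Uf q1)) t ! i"
      using i M1 disj a1c grb[OF q(1) i] cst[OF q(1) i] unfolding z_def D1_def D2_def by auto
  qed
  have z2: "z s a2 = line_pt n (Mq q2) (gr (Uf q2)) s" for s
  proof (rule nth_equalityI)
    show "length (z s a2) = length (line_pt n (Mq q2) (gr (Uf q2)) s)" by (simp add: z_def)
    fix i assume "i < length (z s a2)"
    hence i: "i < n" by (simp add: z_def)
    show "z s a2 ! i = line_pt n (Mq q2) (gr (Uf q2)) s ! i"
      using i M2 disj a2c grb[OF q(2) i] cst[OF q(2) i] unfolding z_def D1_def D2_def by auto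
  qed
  have z3: "z s s = line_pt n (Mq q3) (gr (Uf q3)) s" for s
  proof (rule nth_equalityI)
    show "length (z s s) = length (line_pt n (Mq q3) (gr (Uf q3)) s)" by (simp add: z_def)
    fix i assume "i < length (z s s)"
    hence i: "i < n" by (simp add: z_def)
    show "z s s ! i = line_pt n (Mq q3) (gr (Uf q3)) s ! i"
      using i M3 part grb[OF q(3) i] unfolding z_def D1_def D2_def by auto
  qed
  define U1 where "U1 = Uf q1"
  define U2 where "U2 = Uf q2"
  define U3 where "U3 = Uf q3"
  have U: "U1 \<in> LL" "U2 \<in> LL" "U3 \<in> LL" using Uf_LL q unfolding U1_def U2_def U3_def by blast+
  have R1: "line_pt n (Mr U1) (gr U1) ` Px = U1" using rep_U[OF U(1)] by (rule sym)
  have R2: "line_pt n (Mr U2) (gr U2) ` Px = U2" using rep_U[OF U(2)] by (rule sym)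
  have R3: "line_pt n (Mr U3) (gr U3) ` Px = U3" using rep_U[OF U(3)] by (rule sym)
  have inU1: "z a1 t \<in> U1" if "t \<in> Px" for t
  proof -
    have e: "z a1 t = line_pt n (Mr U1) (gr U1) t" unfolding U1_def by (rule z1)
    have "z a1 t \<in> line_pt n (Mr U1) (gr U1) ` Px" unfolding e using that by (rule imageI)
    thus ?thesis by (simp only: R1)
  qed
  have inU2: "z s a2 \<in> U2" if "s \<in> Px" for s
  proof -
    have e: "z s a2 = line_pt n (Mr U2) (gr U2) s" unfolding U2_def by (rule z2)
    have "z s a2 \<in> line_pt n (Mr U2) (gr U2) ` Px" unfolding e using that by (rule imageI)
    thus ?thesis by (simp only: R2)
  qed
  have inU3: "z s s \<in> U3" if "s \<in> Px" for s
  proof -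
    have e: "z s s = line_pt n (Mr U3) (gr U3) s" unfolding U3_def by (rule z3)
    have "z s s \<in> line_pt n (Mr U3) (gr U3) ` Px" unfolding e using that by (rule imageI)
    thus ?thesis by (simp only: R3)
  qed
  have MU: "Mr U1 = D2" "Mr U2 = D1" "Mr U3 = J" using M1 M2 M3 unfolding U1_def U2_def U3_def by simp_all
  have ne: "U1 \<noteq> U2" "U1 \<noteq> U3" "U2 \<noteq> U3" using MU j1D j2D j by metis+
  show False
  proof (cases "a1 = a2")
    case True
    have "z a1 a1 \<in> U1 \<inter> U2 \<inter> U3" using inU1 inU2 inU3 a1P True by blast
    hence "U3 \<inter> U1 \<inter> U2 \<noteq> {}" by blast
    moreover have "Mr U3 = Mr U1 \<union> Mr U2" "Mr U1 \<inter> Mr U2 = {}" using MU part disj unfolding D1_def D2_def by blast+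
    ultimately show False using ntp U ne unfolding no_tripod_def by blast
  next
    case False
    have "z a1 a2 \<in> U1 \<inter> U2" using inU1 inU2 a1P a2P by blast
    moreover have "z a1 a1 \<in> U1 \<inter> U3" using inU1 inU3 a1P by blast
    moreover have "z a2 a2 \<in> U2 \<inter> U3" using inU2 inU3 a2P by blast
    moreover have "U1 \<inter> U2 \<inter> U3 = {}"
    proof (rule ccontr)
      assume "U1 \<inter> U2 \<inter> U3 \<noteq> {}"
      then obtain y where y: "y \<in> U1" "y \<in> U2" "y \<in> U3" by blast
      have "y \<in> line_pt n (Mr U3) (gr U3) ` Px" using y(3) by (simp only: R3)
      then obtain s where s: "y = line_pt n (Mr U3) (gr U3) s" by (rule imageE)
      have "y \<in> line_pt n (Mr U1) (gr U1) ` Px" using y(1) by (simp only: R1)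
      then obtain t1 where t1: "y = line_pt n (Mr U1) (gr U1) t1" by (rule imageE)
      have "y \<in> line_pt n (Mr U2) (gr U2) ` Px" using y(2) by (simp only: R2)
      then obtain t2 where t2: "y = line_pt n (Mr U2) (gr U2) t2" by (rule imageE)
      have n1: "j1 < n" "j2 < n" using J_lt j by blast+
      have "y ! j1 = s" using s MU n1 j by simp
      moreover have "y ! j1 = gr U1 j1" using t1 MU n1 j1D by simp
      moreover have "gr U1 j1 = a1" using grb[OF q(1) n1(1) j(3)] a1_def U1_def by simp
      moreover have "y ! j2 = s" using s MU n1 j by simp
      moreover have "y ! j2 = gr U2 j2" using t2 MU n1 j2D by simp
      moreover have "gr U2 j2 = a2" using grb[OF q(2) n1(2) j(4)] a2_def U2_def by simp
      ultimately show False using False by simp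
    qed
    ultimately have c: "U1 \<inter> U2 \<noteq> {}" "U1 \<inter> U3 \<noteq> {}" "U2 \<inter> U3 \<noteq> {}" "U1 \<inter> U2 \<inter> U3 = {}" by blast+
    have "\<exists>L1\<in>LL. \<exists>L2\<in>LL. \<exists>L3\<in>LL. L1 \<noteq> L2 \<and> L1 \<noteq> L3 \<and> L2 \<noteq> L3 \<and>
      L1 \<inter> L2 \<noteq> {} \<and> L1 \<inter> L3 \<noteq> {} \<and> L2 \<inter> L3 \<noteq> {} \<and> L1 \<inter> L2 \<inter> L3 = {}"
      apply (rule bexI[where x=U1], rule bexI[where x=U2], rule bexI[where x=U3])
      using c ne U by simp_all
    thus False using ntr unfolding no_triangle_def by blast
  qed
qed

end

context ql2 begin

lemma caseII: "\<exists>U\<in>LL. L \<subseteq> eta U ` P"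
proof (cases "\<forall>q\<in>L. Mq q = J")
  case True
  obtain q1 where q1: "q1 \<in> L" using avoid1 by blast
  have same: "Uf q = Uf q1" if q: "q \<in> L" for q
  proof (rule sameU[OF q q1])
    show "Mq q = Mq q1" using True q q1 by simp
    show "\<forall>j<n. j \<notin> Mq q \<longrightarrow> bk j q = bk j q1" using notJ_const True q q1 by metis
  qed
  have "L \<subseteq> eta (Uf q1) ` P"
  proof
    fix q assume q: "q \<in> L"
    show "q \<in> eta (Uf q1) ` P" using in_etaP[OF q] same[OF q] by simp
  qed
  thus ?thesis using Uf_LL[OF q1] by blast
next
  case False
  then obtain q1 where q1: "q1 \<in> L" "Mq q1 \<noteq> J" by blast
  then obtain j1 where j1: "j1 \<in> J" "j1 \<notin> Mq q1" using MsubJ by blast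
  obtain j2 where j2: "j2 \<in> Mq q1" using rep_ne[OF Uf_LL[OF q1(1)]] by blast
  have j2J: "j2 \<in> J" using MsubJ[OF q1(1)] j2 by blast
  obtain q2 where q2: "q2 \<in> L" "j2 \<notin> Mq q2" using notype0[OF j2J q1(1) j1] by blast
  have q12: "q1 \<noteq> q2" using j2 q2 by blast
  show ?thesis
  proof (cases "\<exists>q3\<in>L. q3 \<noteq> q1 \<and> q3 \<noteq> q2 \<and> Mq q3 \<noteq> J")
    case True
    then obtain q3 where q3: "q3 \<in> L" "q3 \<noteq> q1" "q3 \<noteq> q2" "Mq q3 \<noteq> J" by blast
    then obtain j3 where j3: "j3 \<in> J" "j3 \<notin> Mq q3" using MsubJ by blast
    have False using caseIIa[OF q1(1) q2(1) q3(1) q12 _ _ j1(1) j2J j3(1) j1(2) q2(2) j3(2)] q3 by metis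
    thus ?thesis by blast
  next
    case False
    obtain q3 where q3: "q3 \<in> L" "q3 \<noteq> q1" "q3 \<noteq> q2" using avoid2 by blast
    have "\<forall>q\<in>L. q \<noteq> q1 \<and> q \<noteq> q2 \<longrightarrow> Mq q = J" using False by blast
    hence False using caseIIb[OF q1(1) q2(1) q3(1) q12 _ _ j1(1) j2J j1(2) q2(2)] q3 by metis
    thus ?thesis by blast
  qed
qed

end

context amalg begin

lemma eta_line:
  assumes U: "U \<in> LL"
  shows "eta U (line_pt m M' g' c) = line_pt (m*n) {i. i<m*n \<and> i div m \<in> Mr U \<and> i mod m \<in> M'}
     (\<lambda>i. if i div m \<in> Mr U then g' (i mod m) else gr U (i div m) ! (i mod m)) c"
proof (rule nth_equalityI)
  have len: "length (eta U (line_pt m M' g' c)) = m*n"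
    by (rule eta_len[OF length_line_pt gr_len[OF U]])
  thus "length (eta U (line_pt m M' g' c)) = length (line_pt (m*n) {i. i<m*n \<and> i div m \<in> Mr U \<and> i mod m \<in> M'}
     (\<lambda>i. if i div m \<in> Mr U then g' (i mod m) else gr U (i div m) ! (i mod m)) c)" by simp
  fix i assume "i < length (eta U (line_pt m M' g' c))"
  hence i: "i < m*n" using len by simp
  hence m0: "m > 0" by (cases m) auto
  have j: "i div m < n" using i m0 by (simp add: less_mult_imp_div_less mult.commute)
  have t: "i mod m < m" using m0 by simp
  have "eta U (line_pt m M' g' c) ! i = eta U (line_pt m M' g' c) ! ((i div m)*m + i mod m)" by simp
  also have "\<dots> = (if i div m \<in> Mr U then line_pt m M' g' c else gr U (i div m)) ! (i mod m)"
    by (rule eta_nth[OF length_line_pt gr_len[OF U] j t])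
  finally show "eta U (line_pt m M' g' c) ! i = line_pt (m*n) {i. i<m*n \<and> i div m \<in> Mr U \<and> i mod m \<in> M'}
     (\<lambda>i. if i div m \<in> Mr U then g' (i mod m) else gr U (i div m) ! (i mod m)) c ! i"
    using i t by simp
qed

end

context ql begin

lemma main: "\<exists>U\<in>LL. L \<subseteq> eta U ` P"
proof (cases "\<exists>q0\<in>L. psi (pf q0) = x")
  case True
  then show ?thesis using caseI by blast
next
  case False
  interpret ql2 k m n V E P psi x LL Mr gr L
    by unfold_locales (use False in blast)
  show ?thesis by (rule caseII)
qed

lemma L_good: "comb_line {1..k} (m*n) L \<and> psiS ` L \<in> E"
proof -
  obtain U where U: "U \<in> LL" "L \<subseteq> eta U ` P" using main by blast
  obtain j0 where j0: "j0 \<in> Mr U" using rep_ne[OF U(1)] by blast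
  have j0n: "j0 < n" using rep_M[OF U(1)] j0 by blast
  have bkk: "bk j0 q \<in> P \<and> eta U (bk j0 q) = q" if q: "q \<in> L" for q
  proof -
    obtain p where p: "p \<in> P" "q = eta U p" using U(2) q by blast
    have "bk j0 q = p" using eta_blk'[OF U(1) p(1) j0n] j0 p(2) by simp
    thus ?thesis using p by simp
  qed
  have inj: "inj_on (bk j0) L" by (rule inj_on_inverseI[where g="eta U"]) (use bkk in blast)
  hence j0J: "j0 \<in> J" unfolding J_def using j0n by blast
  define L' where "L' = bk j0 ` L"
  obtain M' g' where rep': "line_rep {1..k} m M' g' L'" using Lj_line[OF j0J] unfolding comb_line_def L'_def by blast
  have psiE: "psi ` L' \<in> E" using Lj_line[OF j0J] unfolding L'_def by blast
  have LL': "L = eta U ` L'"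
  proof
    show "L \<subseteq> eta U ` L'"
    proof
      fix q assume q: "q \<in> L"
      have "q = eta U (bk j0 q)" using bkk[OF q] by simp
      moreover have "bk j0 q \<in> L'" unfolding L'_def using q by (rule imageI)
      ultimately show "q \<in> eta U ` L'" by (rule image_eqI)
    qed
    show "eta U ` L' \<subseteq> L"
    proof
      fix y assume "y \<in> eta U ` L'"
      then obtain q where q: "q \<in> L" "y = eta U (bk j0 q)" unfolding L'_def by blast
      thus "y \<in> L" using bkk[OF q(1)] by simp
    qed
  qed
  have psiL: "psiS ` L = psi ` L'"
  proof -
    have "psiS ` L = psiS ` eta U ` L'" using LL' by simp
    also have "\<dots> = (\<lambda>p. psiS (eta U p)) ` L'" by (simp only: image_image)
    also have "\<dots> = psi ` L'"
    proof (rule image_cong[OF refl])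
      fix p assume "p \<in> L'"
      hence "p \<in> P" unfolding L'_def using bkk by blast
      thus "psiS (eta U p) = psi p" using psiS_eta[OF U(1)] by blast
    qed
    finally show ?thesis .
  qed
  have LM: "M' \<subseteq> {..<m}" "M' \<noteq> {}" "\<forall>i\<in>{..<m} - M'. g' i \<in> {1..k}" "L' = line_pt m M' g' ` {1..k}"
    using rep' unfolding line_rep_def by blast+
  define M'' where "M'' = {i. i<m*n \<and> i div m \<in> Mr U \<and> i mod m \<in> M'}"
  define g'' where "g'' = (\<lambda>i. if i div m \<in> Mr U then g' (i mod m) else gr U (i div m) ! (i mod m))"
  have "line_rep {1..k} (m*n) M'' g'' L"
    unfolding line_rep_def
  proof (intro conjI)
    show "M'' \<subseteq> {..<m*n}" unfolding M''_def by blast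
    obtain t where t: "t \<in> M'" using LM(2) by blast
    have tm: "t < m" using t LM(1) by blast
    have "(j0*m+t) div m = j0" "(j0*m+t) mod m = t" using tm by simp_all
    hence "j0*m+t \<in> M''" unfolding M''_def using idx_lt[OF j0n tm] j0 t by simp
    thus "M'' \<noteq> {}" by blast
    show "\<forall>i\<in>{..<m*n} - M''. g'' i \<in> {1..k}"
    proof
      fix i assume i: "i \<in> {..<m*n} - M''"
      hence il: "i < m*n" by blast
      hence m0: "m > 0" by (cases m) auto
      have j: "i div m < n" using il m0 by (simp add: less_mult_imp_div_less mult.commute)
      have tt: "i mod m < m" using m0 by simp
      show "g'' i \<in> {1..k}"
      proof (cases "i div m \<in> Mr U")
        case True
        hence "i mod m \<notin> M'" using i unfolding M''_def by blast
        thus ?thesis using LM(3) tt True unfolding g''_def by simp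
      next
        case False
        have gP: "gr U (i div m) \<in> P" using rep_g[OF U(1) j False] by blast
        hence "gr U (i div m) ! (i mod m) \<in> set (gr U (i div m))" using P_len tt by simp
        thus ?thesis using P_cube[OF gP] False unfolding g''_def by auto
      qed
    qed
    have "L = eta U ` (line_pt m M' g' ` {1..k})" using LL' LM(4) by simp
    also have "\<dots> = (\<lambda>c. eta U (line_pt m M' g' c)) ` {1..k}" by (simp only: image_image)
    also have "\<dots> = line_pt (m*n) M'' g'' ` {1..k}"
      unfolding M''_def g''_def using eta_line[OF U(1)] by simp
    finally show "L = line_pt (m*n) M'' g'' ` {1..k}" .
  qed
  hence "comb_line {1..k} (m*n) L" unfolding comb_line_def by blast
  thus ?thesis using psiL psiE by simp
qed

end

context amalg begin
lemma pic_final: "picture k V E (m*n) Q psiS"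
  unfolding picture_def
proof (intro conjI allI impI ballI)
  show "Q \<subseteq> cube {1..k} (m*n)" by (rule Q_cube)
  fix q assume "q \<in> Q" thus "psiS q \<in> V" by (rule psiS_V)
next
  fix L assume a: "quasiline k (m*n) L \<and> L \<subseteq> Q"
  interpret ql k m n V E P psi x LL Mr gr L
    by unfold_locales (use a in blast)+
  show "comb_line {1..k} (m*n) L" using L_good by blast
  show "psiS ` L \<in> E" using L_good by blast
qed
end

theorem proposition4p5:
  fixes k m n :: nat and V :: "'v set" and E :: "'v set set"
    and P :: "nat list set" and psi :: "nat list \<Rightarrow> 'v" and x :: 'v
    and \<L> :: "nat list list set set"
    and Mr :: "nat list list set \<Rightarrow> nat set" and gr :: "nat list list set \<Rightarrow> nat \<Rightarrow> nat list"
  assumes "k \<ge> 3"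
    and "uniform_hypergraph k V E"
    and "k = 3 \<Longrightarrow> K4minus_free E"
    and "picture k V E m P psi"
    and "x \<in> V"
    and "n \<ge> 1"
    and "\<forall>U\<in>\<L>. line_rep {p\<in>P. psi p = x} n (Mr U) (gr U) U"
    and "no_tripod \<L> Mr"
    and "no_triangle \<L>"
  shows "picture k V E (m * n) (amalg_Q P n \<L> Mr gr) (amalg_psi P psi n \<L> Mr gr)"
proof -
  interpret amalg k m n V E P psi x \<L> Mr gr
    by unfold_locales (use assms in auto)
  show ?thesis by (rule pic_final)
qed

end
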